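(* In the model described in the context, suppose $\triangle C>0$, and let $Q$ be the set of symmetric forward-market equilibria. Let $\zeta_1=(M+1)\triangle C+\min\big(MN\triangle C,\ MNk+2M\sqrt{Nk\triangle C}\big)$. Then there exists $(f,x)\in Q$ with $y_j(f\mathbf1,x\mathbf1)=0$ if and only if $\alpha_x\le\zeta_1$. Furthermore, if $\alpha_x>(M+1)\triangle C$, then there is $\bar f$ such that, for $(f,x)\in Q$, $y_j(f\mathbf1,x\mathbf1)=0$ if and only if \[(f,x)\in S:=\Big\{(f,x)\in\mathbb{R}\times\mathbb{R}_+:\ x=\tfrac1M(\alpha_x-(\triangle C-f)),\ 0\le f\le\bar f\Big\},\] and $S\subseteq Q$; moreover $\bar f>0$ if $\alpha_x<\zeta_1$.
   Context: Model: $M\ge1$ leaders and $N\ge2$ followers; inverse demand $P(q)=\alpha-\beta q$, $\alpha,\beta>0$; leader marginal cost $C$, follower marginal cost $c$, $c\ge C>0$; follower capacity $k>0$. Leader $i$ produces $x_i\ge0$; follower $j$ takes forward position $f_j\in\mathbb{R}$ and spot production $y_j\in[0,k]$. Given $\mathbf f,\mathbf x$, the spot market is the game among followers where follower $j$ chooses $y_j\in[0,k]$ to maximize $P(\sum_ix_i+\sum_{j'}y_{j'})(y_j-f_j)-cy_j$; its unique Nash equilibrium is $\mathbf y(\mathbf f,\mathbf x)=(y_1(\mathbf f,\mathbf x),\dots,y_N(\mathbf f,\mathbf x))$. Follower $j$'s forward payoff is $(P(\sum_ix_i+\sum_{j'}y_{j'}(\mathbf f,\mathbf x))-c)y_j(\mathbf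 f,\mathbf x)$, maximized over $f_j\in\mathbb{R}$; leader $i$'s payoff is $(P(\sum_ix_i+\sum_{j'}y_{j'}(\mathbf f,\mathbf x))-C)x_i$, maximized over $x_i\in\mathbb{R}_+$. A Nash equilibrium of the forward market is $(\mathbf f,\mathbf x)$ where no leader or follower can strictly gain by a unilateral deviation. $Q=\{(f,x)\in\mathbb{R}\times\mathbb{R}_+:(f\mathbf1,x\mathbf1)\text{ is a Nash equilibrium}\}$. $\alpha_x=(\alpha-C)/\beta$, $\triangle C=(c-C)/\beta$. *)

theory Defs
  imports Complex_Main
begin

text \<open>Leaders are indexed by i < M, followers by j < N. Profiles are functions
  nat \<Rightarrow> real; only the entries with index below M (resp. N) matter.\<close>

definition price :: "real \<Rightarrow> real \<Rightarrow> real \<Rightarrow> real" where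
  "price \<alpha> \<beta> q = \<alpha> - \<beta> * q"

definition spot_payoff ::
  "real \<Rightarrow> real \<Rightarrow> real \<Rightarrow> nat \<Rightarrow> real \<Rightarrow> (nat \<Rightarrow> real) \<Rightarrow> (nat \<Rightarrow> real) \<Rightarrow> nat \<Rightarrow> real" where
  "spot_payoff \<alpha> \<beta> c N X f y j =
     price \<alpha> \<beta> (X + (\<Sum>j'<N. y j')) * (y j - f j) - c * y j"

definition spot_NE ::
  "real \<Rightarrow> real \<Rightarrow> real \<Rightarrow> real \<Rightarrow> nat \<Rightarrow> real \<Rightarrow> (nat \<Rightarrow> real) \<Rightarrow> (nat \<Rightarrow> real) \<Rightarrow> bool" where
  "spot_NE \<alpha> \<beta> c k N X f y \<longleftrightarrow>
     (\<forall>j. N \<le> j \<longrightarrow> y j = 0) \<and>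
     (\<forall>j<N. 0 \<le> y j \<and> y j \<le> k \<and>
        (\<forall>z. 0 \<le> z \<and> z \<le> k \<longrightarrow>
           spot_payoff \<alpha> \<beta> c N X f (y(j := z)) j \<le> spot_payoff \<alpha> \<beta> c N X f y j))"

definition spot_eq ::
  "real \<Rightarrow> real \<Rightarrow> real \<Rightarrow> real \<Rightarrow> nat \<Rightarrow> nat \<Rightarrow> (nat \<Rightarrow> real) \<Rightarrow> (nat \<Rightarrow> real) \<Rightarrow> (nat \<Rightarrow> real)" where
  "spot_eq \<alpha> \<beta> c k M N f x = (THE y. spot_NE \<alpha> \<beta> c k N (\<Sum>i<M. x i) f y)"

definition total_output ::
  "real \<Rightarrow> real \<Rightarrow> real \<Rightarrow> real \<Rightarrow> nat \<Rightarrow> nat \<Rightarrow> (nat \<Rightarrow> real) \<Rightarrow> (nat \<Rightarrow> real) \<Rightarrow> real" where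
  "total_output \<alpha> \<beta> c k M N f x =
     (\<Sum>i<M. x i) + (\<Sum>j<N. spot_eq \<alpha> \<beta> c k M N f x j)"

definition follower_payoff ::
  "real \<Rightarrow> real \<Rightarrow> real \<Rightarrow> real \<Rightarrow> nat \<Rightarrow> nat \<Rightarrow> (nat \<Rightarrow> real) \<Rightarrow> (nat \<Rightarrow> real) \<Rightarrow> nat \<Rightarrow> real" where
  "follower_payoff \<alpha> \<beta> c k M N f x j =
     (price \<alpha> \<beta> (total_output \<alpha> \<beta> c k M N f x) - c) * spot_eq \<alpha> \<beta> c k M N f x j"

definition leader_payoff ::
  "real \<Rightarrow> real \<Rightarrow> real \<Rightarrow> real \<Rightarrow> real \<Rightarrow> nat \<Rightarrow> nat \<Rightarrow> (nat \<Rightarrow> real) \<Rightarrow> (nat \<Rightarrow> real) \<Rightarrow> nat \<Rightarrow> real" where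
  "leader_payoff \<alpha> \<beta> C c k M N f x i =
     (price \<alpha> \<beta> (total_output \<alpha> \<beta> c k M N f x) - C) * x i"

definition fwd_NE ::
  "real \<Rightarrow> real \<Rightarrow> real \<Rightarrow> real \<Rightarrow> real \<Rightarrow> nat \<Rightarrow> nat \<Rightarrow> (nat \<Rightarrow> real) \<Rightarrow> (nat \<Rightarrow> real) \<Rightarrow> bool" where
  "fwd_NE \<alpha> \<beta> C c k M N f x \<longleftrightarrow>
     (\<forall>i<M. 0 \<le> x i) \<and>
     (\<forall>j<N. \<forall>g::real.
        follower_payoff \<alpha> \<beta> c k M N (f(j := g)) x j \<le> follower_payoff \<alpha> \<beta> c k M N f x j) \<and>
     (\<forall>i<M. \<forall>z::real. 0 \<le> z \<longrightarrow>
        leader_payoff \<alpha> \<beta> C c k M N f (x(i := z)) i \<le> leader_payoff \<alpha> \<beta> C c k M N f x i)"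

definition symQ ::
  "real \<Rightarrow> real \<Rightarrow> real \<Rightarrow> real \<Rightarrow> real \<Rightarrow> nat \<Rightarrow> nat \<Rightarrow> (real \<times> real) set" where
  "symQ \<alpha> \<beta> C c k M N =
     {(f, x). 0 \<le> x \<and> fwd_NE \<alpha> \<beta> C c k M N (\<lambda>_. f) (\<lambda>_. x)}"

end

theory Submission
  imports Defs "HOL-Analysis.Analysis"
begin


lemma sum_upd: "finite S \<Longrightarrow> j \<in> S \<Longrightarrow> sum (y(j:=z)) S = sum y S - y j + (z::real)"
proof -
  assume "finite S" "j \<in> S"
  then have "sum (y(j:=z)) S = (y(j:=z)) j + sum (y(j:=z)) (S - {j})" by (simp add: sum.remove)
  also have "sum (y(j:=z)) (S - {j}) = sum y (S - {j})" by (rule sum.cong) auto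
  also have "sum y (S - {j}) = sum y S - y j" using \<open>finite S\<close> \<open>j \<in> S\<close> by (simp add: sum_diff1)
  finally show ?thesis by simp
qed

definition kkt :: "real \<Rightarrow> real \<Rightarrow> real \<Rightarrow> real \<Rightarrow> nat \<Rightarrow> real \<Rightarrow> (nat \<Rightarrow> real) \<Rightarrow> (nat \<Rightarrow> real) \<Rightarrow> bool" where
  "kkt \<alpha> \<beta> c k N X f y \<longleftrightarrow> (\<forall>j. N \<le> j \<longrightarrow> y j = 0) \<and>
     (\<forall>j<N. 0 \<le> y j \<and> y j \<le> k \<and>
       (0 < y j \<longrightarrow> 0 \<le> (\<alpha>-c)/\<beta> - X - sum y {..<N} + f j - y j) \<and>
       (y j < k \<longrightarrow> (\<alpha>-c)/\<beta> - X - sum y {..<N} + f j - y j \<le> 0))"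

lemma payoff_diff:
  assumes "\<beta> > 0" "j < N"
  shows "spot_payoff \<alpha> \<beta> c N X f (y(j:=z)) j - spot_payoff \<alpha> \<beta> c N X f y j
       = \<beta> * (((\<alpha>-c)/\<beta> - X - sum y {..<N} + f j - y j) * (z - y j) - (z - y j)^2)"
proof -
  have s: "sum (y(j:=z)) {..<N} = sum y {..<N} - y j + z" using assms by (intro sum_upd) auto
  show ?thesis using assms(1) unfolding spot_payoff_def price_def s
    by (simp add: field_simps power2_eq_square)
qed

lemma kkt_NE:
  assumes "\<beta> > 0" "kkt \<alpha> \<beta> c k N X f y"
  shows "spot_NE \<alpha> \<beta> c k N X f y"
  unfolding spot_NE_def
proof (intro conjI allI impI)
  fix j assume "N \<le> j" then show "y j = 0" using assms(2) unfolding kkt_def by blast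
next
  fix j assume j: "j < N"
  show "0 \<le> y j" "y j \<le> k" using assms(2) j unfolding kkt_def by auto
  fix z :: real assume z: "0 \<le> z \<and> z \<le> k"
  define d where "d = (\<alpha>-c)/\<beta> - X - sum y {..<N} + f j - y j"
  have "d * (z - y j) \<le> 0"
  proof (cases "d = 0")
    case False
    then consider "d > 0" | "d < 0" by linarith
    then show ?thesis
    proof cases
      case 1
      then have "y j = k" using assms(2) j unfolding kkt_def d_def by force
      then show ?thesis using 1 z by (simp add: mult_nonneg_nonpos)
    next
      case 2
      then have "y j = 0" using assms(2) j unfolding kkt_def d_def by force
      then show ?thesis using 2 z by (simp add: mult_nonpos_nonneg)
    qed
  qed simp
  then have h: "d * (z - y j) - (z - y j)^2 \<le> 0" by (smt (verit) zero_le_power2)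
  have "\<beta> * (d * (z - y j) - (z - y j)^2) \<le> 0"
    using assms(1) h by (intro mult_nonneg_nonpos) auto
  then show "spot_payoff \<alpha> \<beta> c N X f (y(j := z)) j \<le> spot_payoff \<alpha> \<beta> c N X f y j"
    using payoff_diff[OF assms(1) j, of \<alpha> c X f y z] unfolding d_def by linarith
qed

lemma NE_kkt:
  assumes "\<beta> > 0" "spot_NE \<alpha> \<beta> c k N X f y"
  shows "kkt \<alpha> \<beta> c k N X f y"
  unfolding kkt_def
proof (intro conjI allI impI)
  fix j assume "N \<le> j" then show "y j = 0" using assms(2) unfolding spot_NE_def by blast
next
  fix j assume j: "j < N"
  have yj: "0 \<le> y j" "y j \<le> k" and opt: "\<And>z. 0 \<le> z \<Longrightarrow> z \<le> k \<Longrightarrow>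
     spot_payoff \<alpha> \<beta> c N X f (y(j := z)) j \<le> spot_payoff \<alpha> \<beta> c N X f y j"
    using assms(2) j unfolding spot_NE_def by auto
  show "0 \<le> y j" "y j \<le> k" by (fact yj)+
  define d where "d = (\<alpha>-c)/\<beta> - X - sum y {..<N} + f j - y j"
  have key: "d * (z - y j) - (z - y j)^2 \<le> 0" if "0 \<le> z" "z \<le> k" for z
  proof -
    have "\<beta> * (d * (z - y j) - (z - y j)^2) \<le> 0"
      using opt[OF that] payoff_diff[OF assms(1) j, of \<alpha> c X f y z] unfolding d_def by linarith
    then show ?thesis using assms(1) by (simp add: mult_le_0_iff)
  qed
  {
    assume p: "0 < y j"
    show "0 \<le> (\<alpha>-c)/\<beta> - X - sum y {..<N} + f j - y j"
    proof (rule ccontr)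
      assume "\<not> ?thesis" then have dn: "d < 0" unfolding d_def by simp
      define e where "e = min (y j) (- d / 2)"
      have e: "e > 0" "e \<le> y j" "e \<le> - d/2" using p dn unfolding e_def by auto
      have "d * (-e) - (-e)^2 \<le> 0" using key[of "y j - e"] e yj by simp
      moreover have "d * (-e) - (-e)^2 > 0"
      proof -
        have "e * e \<le> e * (-d/2)" using e by (intro mult_left_mono) auto
        moreover have "d * e < 0" using e dn by (simp add: mult_neg_pos)
        ultimately show ?thesis by (simp add: power2_eq_square algebra_simps)
      qed
      ultimately show False by simp
    qed
  }
  {
    assume p: "y j < k"
    show "(\<alpha>-c)/\<beta> - X - sum y {..<N} + f j - y j \<le> 0"
    proof (rule ccontr)
      assume "\<not> ?thesis" then have dn: "d > 0" unfolding d_def by simp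
      define e where "e = min (k - y j) (d / 2)"
      have e: "e > 0" "e \<le> k - y j" "e \<le> d/2" using p dn unfolding e_def by (auto simp: min_def)
      have "d * e - e^2 \<le> 0" using key[of "y j + e"] e yj by simp
      moreover have "d * e - e^2 > 0"
      proof -
        have "e * e \<le> e * (d/2)" using e by (intro mult_left_mono) auto
        moreover have "d * e > 0" using e dn by simp
        ultimately show ?thesis by (simp add: power2_eq_square algebra_simps)
      qed
      ultimately show False by simp
    qed
  }
qed

lemma kkt_unique:
  assumes "kkt \<alpha> \<beta> c k N X f y" "kkt \<alpha> \<beta> c k N X f y'"
  shows "y = y'"
proof -
  define d where "d = (\<lambda>y j. (\<alpha>-c)/\<beta> - X - sum y {..<N} + f j - y j)"
  have vi: "d y j * (y' j - y j) \<le> 0" if j: "j < N" and A: "kkt \<alpha> \<beta> c k N X f y"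
    and B: "kkt \<alpha> \<beta> c k N X f y'" for j y y'
  proof -
    have a: "0 \<le> y j" "y j \<le> k" "0 < y j \<longrightarrow> 0 \<le> d y j" "y j < k \<longrightarrow> d y j \<le> 0"
      using A j unfolding kkt_def d_def by auto
    have b: "0 \<le> y' j" "y' j \<le> k" using B j unfolding kkt_def by auto
    consider "y' j = y j" | "y' j > y j" | "y' j < y j" by linarith
    then show ?thesis
    proof cases
      case 2 then show ?thesis using a b by (simp add: mult_nonpos_nonneg)
    next
      case 3 then show ?thesis using a b by (simp add: mult_nonneg_nonpos)
    qed simp
  qed
  define \<delta> where "\<delta> = (\<lambda>j. y j - y' j)"
  have "(\<Sum>j<N. (d y j - d y' j) * (y' j - y j)) \<le> 0"
  proof (rule sum_nonpos)
    fix j assume "j \<in> {..<N}"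
    then have j: "j < N" by simp
    have 1: "d y j * (y' j - y j) \<le> 0" by (rule vi[OF j assms(1,2)])
    have 2: "d y' j * (y j - y' j) \<le> 0" by (rule vi[OF j assms(2,1)])
    have "(d y j - d y' j) * (y' j - y j) = d y j * (y' j - y j) + d y' j * (y j - y' j)"
      by (simp add: algebra_simps)
    then show "(d y j - d y' j) * (y' j - y j) \<le> 0" using 1 2 by linarith
  qed
  moreover have "(\<Sum>j<N. (d y j - d y' j) * (y' j - y j)) =
      (\<Sum>j<N. (sum \<delta> {..<N}) * \<delta> j + (\<delta> j)^2)"
    unfolding d_def \<delta>_def by (intro sum.cong) (auto simp: sum_subtractf algebra_simps power2_eq_square)
  moreover have "(\<Sum>j<N. (sum \<delta> {..<N}) * \<delta> j + (\<delta> j)^2) = (sum \<delta> {..<N})^2 + (\<Sum>j<N. (\<delta> j)^2)"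
    by (simp add: sum.distrib sum_distrib_left[symmetric] power2_eq_square)
  ultimately have "(\<Sum>j<N. (\<delta> j)^2) \<le> 0"
    by (smt (verit) zero_le_power2)
  then have "\<forall>j\<in>{..<N}. (\<delta> j)^2 = 0"
    using sum_nonneg_eq_0_iff[of "{..<N}" "\<lambda>j. (\<delta> j)^2"]
    by (smt (verit) finite_lessThan sum_nonneg zero_le_power2)
  then have "\<forall>j<N. y j = y' j" unfolding \<delta>_def by auto
  moreover have "\<forall>j. N \<le> j \<longrightarrow> y j = y' j" using assms unfolding kkt_def by auto
  ultimately show ?thesis by (intro ext) (meson not_less)
qed

lemma spot_eq_kkt:
  assumes "\<beta> > 0" "kkt \<alpha> \<beta> c k N (\<Sum>i<M. x i) f y"
  shows "spot_eq \<alpha> \<beta> c k M N f x = y"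
  unfolding spot_eq_def
  apply (rule the_equality)
  using kkt_NE[OF assms] apply simp
  using NE_kkt[OF assms(1)] kkt_unique assms(2) by metis



locale mkt =
  fixes \<alpha> \<beta> C c k :: real and M N :: nat
  assumes M1: "M \<ge> 1" and N2: "N \<ge> 2" and bpos: "\<beta> > 0" and kpos: "k > 0"
    and Dpos0: "(c - C)/\<beta> > 0"
begin

definition "a = (\<alpha> - C)/\<beta>"
definition "D = (c - C)/\<beta>"
definition "A = (\<alpha> - c)/\<beta>"
definition "cl v = max 0 (min k v)"

lemma Dpos: "D > 0" using Dpos0 unfolding D_def .
lemma A_eq: "A = a - D" unfolding A_def a_def D_def by (simp add: diff_divide_distrib)
lemma price_c: "price \<alpha> \<beta> q - c = \<beta> * (A - q)"
  unfolding price_def A_def using bpos by (simp add: field_simps)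
lemma price_C: "price \<alpha> \<beta> q - C = \<beta> * (a - q)"
  unfolding price_def a_def using bpos by (simp add: field_simps)
lemma cl_ge0: "0 \<le> cl v" unfolding cl_def by simp
lemma cl_lek: "cl v \<le> k" unfolding cl_def using kpos by simp

lemma sum_dev: "i < M \<Longrightarrow> (\<Sum>i'<M. ((\<lambda>_. x)(i:=z)) i') = real M * x - x + z"
  by (subst sum_upd) auto

lemma spot_sym:
  "spot_eq \<alpha> \<beta> c k M N (\<lambda>_. f) xs =
     (\<lambda>j. if j < N then cl ((A - sum xs {..<M} + f)/(real N + 1)) else 0)"
proof (rule spot_eq_kkt[OF bpos])
  define X where "X = sum xs {..<M}"
  define w where "w = (A - X + f)/(real N + 1)"
  define y where "y = (\<lambda>j. if j < N then cl w else 0)"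
  have sy: "sum y {..<N} = N * cl w" unfolding y_def by simp
  have d: "(\<alpha>-c)/\<beta> - X - sum y {..<N} + f - y j = (real N+1) * (w - cl w)" if "j < N" for j
  proof -
    have hw: "(real N+1)*w = A - X + f" unfolding w_def by (simp add: field_simps)
    have yj: "y j = cl w" using that by (simp add: y_def)
    show ?thesis unfolding sy yj A_def[symmetric] using hw by (simp add: algebra_simps)
  qed
  show "kkt \<alpha> \<beta> c k N (sum xs {..<M}) (\<lambda>_. f) (\<lambda>j. if j < N then cl ((A - sum xs {..<M} + f)/(real N + 1)) else 0)"
    unfolding kkt_def X_def[symmetric] w_def[symmetric] y_def[symmetric]
  proof (intro conjI allI impI)
    fix j assume j: "j < N"
    show "0 \<le> y j" "y j \<le> k" using j cl_ge0 cl_lek by (auto simp: y_def)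
    show "0 < y j \<Longrightarrow> 0 \<le> (\<alpha>-c)/\<beta> - X - sum y {..<N} + f - y j"
      using j unfolding d[OF j] by (auto simp: y_def cl_def)
    show "y j < k \<Longrightarrow> (\<alpha>-c)/\<beta> - X - sum y {..<N} + f - y j \<le> 0"
      using j unfolding d[OF j] by (auto simp: y_def cl_def mult_le_0_iff)
  qed (simp add: y_def)
qed

lemma spot_dev:
  assumes j0: "j0 < N" and neg: "A - sum xs {..<M} + f \<le> 0"
  shows "spot_eq \<alpha> \<beta> c k M N ((\<lambda>_. f)(j0 := g)) xs =
     (\<lambda>j. if j = j0 then cl ((A - sum xs {..<M} + g)/2) else 0)"
proof (rule spot_eq_kkt[OF bpos])
  define X where "X = sum xs {..<M}"
  define w where "w = (A - X + g)/2"
  define y where "y = (\<lambda>j. if j = j0 then cl w else 0)"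
  have sy: "sum y {..<N} = cl w" unfolding y_def using j0 by simp
  have hw: "2*w = A - X + g" unfolding w_def by simp
  show "kkt \<alpha> \<beta> c k N (sum xs {..<M}) ((\<lambda>_. f)(j0 := g)) (\<lambda>j. if j = j0 then cl ((A - sum xs {..<M} + g)/2) else 0)"
    unfolding kkt_def X_def[symmetric] w_def[symmetric] y_def[symmetric] A_def[symmetric]
  proof (intro conjI allI impI)
    fix j assume j: "j < N"
    show "0 \<le> y j" "y j \<le> k" using j cl_ge0 cl_lek kpos by (auto simp: y_def)
    {
      assume "0 < y j"
      then have "j = j0" by (cases "j = j0") (auto simp: y_def)
      then show "0 \<le> A - X - sum y {..<N} + ((\<lambda>_. f)(j0 := g)) j - y j"
        using \<open>0 < y j\<close> hw unfolding sy by (auto simp: y_def cl_def)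
    }
    {
      assume "y j < k"
      show "A - X - sum y {..<N} + ((\<lambda>_. f)(j0 := g)) j - y j \<le> 0"
      proof (cases "j = j0")
        case True
        then show ?thesis using \<open>y j < k\<close> hw unfolding sy by (auto simp: y_def cl_def)
      next
        case False
        then show ?thesis using neg cl_ge0[of w] kpos unfolding sy X_def by (simp add: y_def)
      qed
    }
  next
    fix j assume "N \<le> j" then show "y j = 0" using j0 by (simp add: y_def)
  qed
qed

lemma fp_sym: fixes f x :: real shows "j < N \<Longrightarrow> follower_payoff \<alpha> \<beta> c k M N (\<lambda>_. f) (\<lambda>_. x) j
   = \<beta> * (A - M*x - N * cl ((A - M*x + f)/(real N + 1))) * cl ((A - M*x + f)/(real N + 1))"
  unfolding follower_payoff_def total_output_def spot_sym price_c by simp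

lemma fp_dev: fixes f x g :: real shows "j < N \<Longrightarrow> A - M*x + f \<le> 0 \<Longrightarrow>
   follower_payoff \<alpha> \<beta> c k M N ((\<lambda>_. f)(j := g)) (\<lambda>_. x) j
   = \<beta> * (A - M*x - cl ((A - M*x + g)/2)) * cl ((A - M*x + g)/2)"
proof -
  assume j: "j < N" and n: "A - M*x + f \<le> 0"
  have e: "spot_eq \<alpha> \<beta> c k M N ((\<lambda>_. f)(j := g)) (\<lambda>_. x) = (\<lambda>j'. if j' = j then cl ((A - M*x + g)/2) else 0)"
    proof -
    have hs: "sum (\<lambda>_. x) {..<M} = real M * x" by simp
    show ?thesis using spot_dev[OF j, of "\<lambda>_. x" f g] n unfolding hs by simp
  qed
  show ?thesis unfolding follower_payoff_def total_output_def price_c e using j by simp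
qed

lemma lp_dev: fixes f x z :: real shows "i < M \<Longrightarrow> leader_payoff \<alpha> \<beta> C c k M N (\<lambda>_. f) ((\<lambda>_. x)(i := z)) i
   = \<beta> * (a - (M*x - x + z) - N * cl ((A - (M*x - x + z) + f)/(real N + 1))) * z"
  unfolding leader_payoff_def total_output_def spot_sym price_C sum_dev by simp

lemma lp_sym: fixes f x :: real shows "i < M \<Longrightarrow> leader_payoff \<alpha> \<beta> C c k M N (\<lambda>_. f) (\<lambda>_. x) i
   = \<beta> * (a - M*x - N * cl ((A - M*x + f)/(real N + 1))) * x"
proof -
  assume i: "i < M"
  have "(\<lambda>_. x)(i:=x) = (\<lambda>_::nat. x)" by (rule ext) simp
  then show ?thesis using lp_dev[OF i, of f x x] by simp
qed

lemma spot_sym': fixes f x :: real shows "j < N \<Longrightarrow> spot_eq \<alpha> \<beta> c k M N (\<lambda>_. f) (\<lambda>_. x) j = cl ((A - M*x + f)/(real N + 1))"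
  unfolding spot_sym by simp

lemma Q_iff: fixes f x :: real shows "(f, x) \<in> symQ \<alpha> \<beta> C c k M N \<longleftrightarrow> 0 \<le> x \<and>
   (\<forall>j<N. \<forall>g. follower_payoff \<alpha> \<beta> c k M N ((\<lambda>_. f)(j := g)) (\<lambda>_. x) j \<le> follower_payoff \<alpha> \<beta> c k M N (\<lambda>_. f) (\<lambda>_. x) j) \<and>
   (\<forall>i<M. \<forall>z. 0 \<le> z \<longrightarrow> leader_payoff \<alpha> \<beta> C c k M N (\<lambda>_. f) ((\<lambda>_. x)(i := z)) i \<le> leader_payoff \<alpha> \<beta> C c k M N (\<lambda>_. f) (\<lambda>_. x) i)"
  unfolding symQ_def fwd_NE_def using M1 by auto

end


context mkt begin

definition "Y0 f x \<longleftrightarrow> (f, x) \<in> symQ \<alpha> \<beta> C c k M N \<and> (\<forall>j<N. spot_eq \<alpha> \<beta> c k M N (\<lambda>_. f) (\<lambda>_. x) j = 0)"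

definition "FF = {f. 0 \<le> f \<and> (A+f)/real M \<le> (real N+1)*(D-f) \<and>
   (A+f)/real M \<le> (D-f) + real N*k + 2 * sqrt((D-f)*(real N*k))}"

lemma cl_zero_iff: "cl v = 0 \<longleftrightarrow> v \<le> 0" unfolding cl_def using kpos by auto
lemma cl_id: "0 \<le> v \<Longrightarrow> v \<le> k \<Longrightarrow> cl v = v" unfolding cl_def by auto
lemma cl_k: "k \<le> v \<Longrightarrow> cl v = k" unfolding cl_def using kpos by auto

lemma Y0_iff: "Y0 f x \<longleftrightarrow> (f, x) \<in> symQ \<alpha> \<beta> C c k M N \<and> A - real M * x + f \<le> 0"
proof -
  have N0: "0 < N" using N2 by simp
  have "(\<forall>j<N. spot_eq \<alpha> \<beta> c k M N (\<lambda>_. f) (\<lambda>_. x) j = 0) \<longleftrightarrow> cl ((A - M*x + f)/(real N+1)) = 0"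
    using spot_sym'[of 0 f x] N0 spot_sym'[of _ f x] by metis
  also have "\<dots> \<longleftrightarrow> A - real M * x + f \<le> 0" unfolding cl_zero_iff
    by (simp add: divide_le_0_iff add_pos_pos)
  finally show ?thesis unfolding Y0_def by simp
qed

lemma construct:
  assumes "a \<le> (real M + 1) * D"
  shows "Y0 (- \<bar>A\<bar>) (max 0 a / (real M + 1))"
proof -
  define x where "x = max 0 a / (real M + 1)"
  define f where "f = - \<bar>A\<bar>"
  have x0: "0 \<le> x" unfolding x_def by simp
  have AX: "A - real M * x \<le> 0"
  proof (cases "a \<le> 0")
    case True then show ?thesis using Dpos unfolding x_def A_eq by simp
  next
    case False
    then have "real M * x = real M * a / (real M + 1)" unfolding x_def by simp
    moreover have "a - D \<le> real M * a / (real M + 1)" using assms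
      by (simp add: field_simps)
    ultimately show ?thesis unfolding A_eq by simp
  qed
  have sp: "A - real M * x + f \<le> 0" using AX unfolding f_def by simp
  have c0: "cl ((A - real M * x + f) / (real N + 1)) = 0" using sp
    by (simp add: cl_zero_iff divide_le_0_iff add_pos_pos)
  have Q: "(f, x) \<in> symQ \<alpha> \<beta> C c k M N"
    unfolding Q_iff
  proof (intro conjI allI impI x0)
    fix j g assume j: "j < N"
    define w where "w = cl ((A - real M * x + g) / 2)"
    have w0: "0 \<le> w" unfolding w_def by (rule cl_ge0)
    have "(A - real M * x - w) * w \<le> 0" using AX w0 by (simp add: mult_nonpos_nonneg)
    then show "follower_payoff \<alpha> \<beta> c k M N ((\<lambda>_. f)(j := g)) (\<lambda>_. x) j
          \<le> follower_payoff \<alpha> \<beta> c k M N (\<lambda>_. f) (\<lambda>_. x) j"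
      unfolding fp_dev[OF j sp] fp_sym[OF j] c0 w_def[symmetric] using bpos
      by (simp add: mult.assoc mult_nonneg_nonpos)
  next
    fix i and z :: real assume i: "i < M" and z: "0 \<le> z"
    have "real M * x - x = (real M - 1) * x" by (simp add: algebra_simps)
    also have "\<dots> \<ge> 0" using M1 x0 by simp
    finally have "A - (real M * x - x + z) + f \<le> 0" using z unfolding f_def by linarith
    then have cz: "cl ((A - (real M * x - x + z) + f) / (real N + 1)) = 0"
      by (simp add: cl_zero_iff divide_le_0_iff add_pos_pos)
    have "(a - (real M * x - x + z)) * z \<le> (a - real M * x) * x"
    proof (cases "a \<le> 0")
      case True
      then have "x = 0" unfolding x_def by simp
      then show ?thesis using True z by (simp add: mult_nonpos_nonneg)
    next
      case False
      then have hx: "(real M + 1) * x = a" unfolding x_def by simp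
      have "a - (real M * x - x + z) = 2*x - z" using hx by (simp add: algebra_simps)
      then have "(a - (real M * x - x + z)) * z = (2*x - z) * z" by simp
      also have "\<dots> \<le> x * x"
      proof -
        have "0 \<le> (x - z)^2" by simp
        then show ?thesis by (simp add: power2_eq_square algebra_simps)
      qed
      also have "\<dots> = (a - real M * x) * x"
      proof -
        have "a - real M * x = x" using hx by (simp add: algebra_simps)
        then show ?thesis by simp
      qed
      finally show ?thesis .
    qed
    then show "leader_payoff \<alpha> \<beta> C c k M N (\<lambda>_. f) ((\<lambda>_. x)(i := z)) i
         \<le> leader_payoff \<alpha> \<beta> C c k M N (\<lambda>_. f) (\<lambda>_. x) i"
      unfolding lp_dev[OF i] lp_sym[OF i] cz c0 using bpos by (simp add: mult.assoc)
  qed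
  show ?thesis unfolding Y0_iff using Q sp unfolding x_def f_def by simp
qed

end


lemma sq_le:
  fixes u x K :: real
  assumes "0 \<le> u" "u \<le> x" "0 \<le> K" "x \<le> u + K + 2 * sqrt (u*K)" "0 \<le> x + u - K"
  shows "(x + u - K)^2 \<le> 4*u*x"
proof -
  define p q r where "p = sqrt u" "q = sqrt K" "r = sqrt x"
  have x0: "0 \<le> x" using assms by linarith
  have p0: "p \<ge> 0" "q \<ge> 0" "r \<ge> 0" unfolding p_q_r_def using assms x0 by auto
  have sq: "u = p^2" "K = q^2" "x = r^2"
    by (simp_all add: p_q_r_def assms(1) assms(3) x0)
  have pq: "sqrt (u*K) = p*q" unfolding p_q_r_def by (simp add: real_sqrt_mult)
  have "x \<le> u + K + 2*(p*q)" using assms(4) pq by simp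
  then have "x \<le> (p+q)^2" unfolding sq by (simp add: power2_eq_square algebra_simps)
  then have "r \<le> p + q" unfolding p_q_r_def
    by (metis p0(1) p0(2) p_q_r_def(1) p_q_r_def(2) add_nonneg_nonneg real_sqrt_le_mono real_sqrt_unique)
  moreover have "p \<le> r" unfolding p_q_r_def using assms(2) by (simp add: real_sqrt_le_mono)
  ultimately have "(r - p)^2 \<le> q^2" by (intro power_mono) auto
  then have h: "x + u - K \<le> 2*r*p" unfolding sq by (simp add: power2_eq_square algebra_simps)
  have "(x + u - K)^2 \<le> (2*r*p)^2" using h assms(5) by (intro power_mono) auto
  also have "\<dots> = 4*u*x" unfolding sq by (simp add: power2_eq_square algebra_simps)
  finally show ?thesis .
qed

lemma sq_gt:
  fixes u x K :: real
  assumes "0 \<le> u" "0 \<le> K" "x > u + K + 2 * sqrt (u*K)"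
  shows "(x + u - K)^2 > 4*u*x"
proof -
  have x0: "x \<ge> 0" using assms by (smt (verit) real_sqrt_ge_zero mult_nonneg_nonneg)
  define p q r where "p = sqrt u" "q = sqrt K" "r = sqrt x"
  have p0: "p \<ge> 0" "q \<ge> 0" "r \<ge> 0" unfolding p_q_r_def using assms x0 by auto
  have sq: "u = p^2" "K = q^2" "x = r^2"
    by (simp_all add: p_q_r_def assms(1) assms(2) x0)
  have pq: "sqrt (u*K) = p*q" unfolding p_q_r_def by (simp add: real_sqrt_mult)
  have "x > u + K + 2*(p*q)" using assms(3) pq by simp
  then have "x > (p+q)^2" unfolding sq by (simp add: power2_eq_square algebra_simps)
  then have "r > p + q" unfolding p_q_r_def
    by (metis p0(1) p0(2) p_q_r_def(1) p_q_r_def(2) add_nonneg_nonneg real_sqrt_less_mono real_sqrt_unique)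
  then have "(r - p)^2 > q^2" using p0 by (intro power_strict_mono) auto
  then have h: "x + u - K > 2*r*p" unfolding sq by (simp add: power2_eq_square algebra_simps)
  have "(x + u - K)^2 > (2*r*p)^2" using h p0 by (intro power_strict_mono) auto
  also have "(2*r*p)^2 = 4*u*x" unfolding sq by (simp add: power2_eq_square algebra_simps)
  finally show ?thesis .
qed

lemma key_bwd:
  fixes k n u x t :: real
  assumes k: "k > 0" and n: "n \<ge> 0" and u: "u > 0" and xu: "u \<le> x" and c1: "x \<le> (n+1)*u"
    and c2: "x \<le> u + n*k + 2 * sqrt (u*(n*k))" and tx: "t \<le> x"
  shows "(u + t - n * max 0 (min k (t/(n+1)))) * (x - t) \<le> u * x"
proof -
  consider "t \<le> 0" | "0 < t" "t/(n+1) \<le> k" | "t/(n+1) > k" by linarith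
  then show ?thesis
  proof cases
    case 1
    have "t/(n+1) \<le> 0" using 1 n by (intro divide_nonpos_pos) auto
    then have v: "max 0 (min k (t/(n+1))) = 0" using k by simp
    have "t * (x - u - t) \<le> 0" using 1 xu by (simp add: mult_nonpos_nonneg)
    then show ?thesis unfolding v by (simp add: algebra_simps)
  next
    case 2
    then have v: "max 0 (min k (t/(n+1))) = t/(n+1)" using n by simp
    have e: "u + t - n * (t/(n+1)) = u + t/(n+1)" using n by (simp add: field_simps)
    have "t/(n+1) * (x - (n+1)*u - t) \<le> 0" using 2 c1 n by (intro mult_nonneg_nonpos) auto
    moreover have "(u + t/(n+1)) * (x - t) - u * x = t/(n+1) * (x - (n+1)*u - t)"
      using n by (simp add: field_simps)
    ultimately show ?thesis unfolding v e by linarith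
  next
    case 3
    then have v: "max 0 (min k (t/(n+1))) = k" using k by simp
    have tk: "t > (n+1)*k" using 3 n by (simp add: field_simps)
    have "4 * ((u + t - n*k) * (x - t)) \<le> ((u + t - n*k) + (x - t))^2"
    proof -
      have "0 \<le> ((u + t - n*k) - (x - t))^2" by simp
      then show ?thesis by (simp add: power2_eq_square algebra_simps)
    qed
    also have "((u + t - n*k) + (x - t)) = x + u - n*k" by simp
    also have "(x + u - n*k)^2 \<le> 4*u*x"
      apply (rule sq_le) using u xu n k c2 tk tx by (auto simp: mult_nonneg_nonneg algebra_simps)
    finally show ?thesis unfolding v by simp
  qed
qed



context mkt begin

lemma char_bwd:
  assumes big: "a > (real M + 1) * D" and fF: "f \<in> FF"
  shows "Y0 f ((A + f) / real M)"
proof -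
  define x where "x = (A + f) / real M"
  define u where "u = D - f"
  have m1: "real M \<ge> 1" using M1 by simp
  have n0: "real N \<ge> 0" by simp
  have f0: "0 \<le> f" and c1: "x \<le> (real N + 1) * u"
    and c2: "x \<le> u + real N * k + 2 * sqrt (u * (real N * k))"
    using fF unfolding FF_def x_def u_def by auto
  have mx: "real M * x = A + f" unfolding x_def using m1 by simp
  have au: "a - real M * x = u" unfolding mx A_eq u_def by simp
  have Apos: "A > real M * D" using big unfolding A_eq by (simp add: algebra_simps)
  have "real M * D \<ge> 0" using Dpos by simp
  then have xpos: "x > 0" using mx Apos f0 m1
    by (smt (verit) mult_pos_pos zero_less_mult_pos)
  have upos: "u > 0" using c1 xpos
    by (smt (verit) mult_nonneg_nonpos of_nat_0_le_iff)
  have xu: "u \<le> x"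
  proof -
    have "(real M + 1) * u \<le> (real M + 1) * D" unfolding u_def using f0 by (simp add: mult_left_mono)
    then have "real M * u + u < a" using big by (simp add: algebra_simps)
    then have "real M * u < real M * x" using au by linarith
    then show ?thesis using m1 by simp
  qed
  have sp: "A - real M * x + f \<le> 0" using mx by simp
  have c0: "cl ((A - real M * x + f) / (real N + 1)) = 0" using mx by (simp add: cl_def)
  have Q: "(f, x) \<in> symQ \<alpha> \<beta> C c k M N"
    unfolding Q_iff
  proof (intro conjI allI impI)
    show "0 \<le> x" using xpos by simp
  next
    fix j g assume j: "j < N"
    define w where "w = cl ((A - real M * x + g) / 2)"
    have w0: "0 \<le> w" unfolding w_def by (rule cl_ge0)
    have "A - real M * x - w \<le> 0" using mx f0 w0 by simp
    then have "(A - real M * x - w) * w \<le> 0" using w0 by (simp add: mult_nonpos_nonneg)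
    then show "follower_payoff \<alpha> \<beta> c k M N ((\<lambda>_. f)(j := g)) (\<lambda>_. x) j
          \<le> follower_payoff \<alpha> \<beta> c k M N (\<lambda>_. f) (\<lambda>_. x) j"
      unfolding fp_dev[OF j sp] fp_sym[OF j] c0 w_def[symmetric] using bpos
      by (simp add: mult.assoc mult_nonneg_nonpos)
  next
    fix i and z :: real assume i: "i < M" and z: "0 \<le> z"
    define t where "t = x - z"
    have e1: "A - (real M * x - x + z) + f = t" unfolding t_def using mx by simp
    have e2: "a - (real M * x - x + z) = u + t" unfolding t_def using au by simp
    have "(u + t - real N * cl (t / (real N + 1))) * (x - t) \<le> u * x"
      unfolding cl_def
      by (rule key_bwd[OF kpos n0 upos xu c1 c2]) (use z in \<open>simp add: t_def\<close>)
    then have "(a - (real M * x - x + z) - real N * cl ((A - (real M * x - x + z) + f) / (real N + 1))) * z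
        \<le> (a - real M * x - real N * cl ((A - real M * x + f) / (real N + 1))) * x"
      unfolding e1 e2 c0 au by (simp add: t_def)
    then show "leader_payoff \<alpha> \<beta> C c k M N (\<lambda>_. f) ((\<lambda>_. x)(i := z)) i
         \<le> leader_payoff \<alpha> \<beta> C c k M N (\<lambda>_. f) (\<lambda>_. x) i"
      unfolding lp_dev[OF i] lp_sym[OF i] using bpos by (simp add: mult.assoc)
  qed
  show ?thesis unfolding Y0_iff x_def[symmetric] using Q sp by simp
qed

end


context mkt begin

lemma char_fwd:
  assumes big: "a > (real M + 1) * D" and Y: "Y0 f x"
  shows "real M * x = A + f \<and> f \<in> FF"
proof -
  define m where "m = real M"
  define n where "n = real N"
  have m1: "m \<ge> 1" using M1 unfolding m_def by simp
  have n2: "n \<ge> 2" using N2 unfolding n_def by simp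
  have Q: "(f, x) \<in> symQ \<alpha> \<beta> C c k M N" and sp: "A - m * x + f \<le> 0"
    using Y unfolding Y0_iff m_def by auto
  have M0: "0 < M" and N0: "0 < N" using M1 N2 by auto
  have x0: "0 \<le> x"
    and FD: "\<And>g. follower_payoff \<alpha> \<beta> c k M N ((\<lambda>_. f)(0 := g)) (\<lambda>_. x) 0 \<le> follower_payoff \<alpha> \<beta> c k M N (\<lambda>_. f) (\<lambda>_. x) 0"
    and LD: "\<And>z. 0 \<le> z \<Longrightarrow> leader_payoff \<alpha> \<beta> C c k M N (\<lambda>_. f) ((\<lambda>_. x)(0 := z)) 0 \<le> leader_payoff \<alpha> \<beta> C c k M N (\<lambda>_. f) (\<lambda>_. x) 0"
    using Q M0 N0 unfolding Q_iff by auto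
  have c0: "cl ((A - m * x + f) / (n + 1)) = 0" using sp n2
    by (simp add: cl_zero_iff divide_le_0_iff add_pos_pos)
  have fp0: "follower_payoff \<alpha> \<beta> c k M N (\<lambda>_. f) (\<lambda>_. x) 0 = 0"
    using fp_sym[OF N0, of f x] c0 unfolding m_def n_def by simp
  have lp0: "leader_payoff \<alpha> \<beta> C c k M N (\<lambda>_. f) (\<lambda>_. x) 0 = \<beta> * ((a - m * x) * x)"
    using lp_sym[OF M0, of f x] c0 unfolding m_def n_def by simp
  have LDz: "(a - (m * x - x + z) - n * cl ((A - (m * x - x + z) + f) / (n + 1))) * z \<le> (a - m * x) * x"
    if "0 \<le> z" for z
  proof -
    have "\<beta> * ((a - (m * x - x + z) - n * cl ((A - (m * x - x + z) + f) / (n + 1))) * z) \<le> \<beta> * ((a - m * x) * x)"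
      using LD[OF that] lp_dev[OF M0, of f x z] lp0 unfolding m_def n_def by (simp add: mult.assoc)
    then show ?thesis using bpos by simp
  qed
  have AX: "A \<le> m * x"
  proof (rule ccontr)
    assume nt: "\<not> ?thesis"
    define e where "e = A - m * x"
    have e0: "e > 0" using nt unfolding e_def by simp
    define w where "w = min k (e/2)"
    have w: "0 < w" "w \<le> k" "w \<le> e/2" unfolding w_def using e0 kpos by auto
    have cw: "cl ((A - m * x + (2*w - e)) / 2) = w" unfolding e_def using w by (simp add: cl_def)
    have "follower_payoff \<alpha> \<beta> c k M N ((\<lambda>_. f)(0 := 2*w - e)) (\<lambda>_. x) 0 = \<beta> * (e - w) * w"
      using fp_dev[OF N0, of x f "2*w - e"] sp cw unfolding m_def e_def by simp
    moreover have "\<beta> * (e - w) * w > 0" using bpos w e0 by simp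
    ultimately show False using FD[of "2*w - e"] fp0 by simp
  qed
  \<comment> \<open>Step 2: right derivative\<close>
  have R: "a \<le> (m + 1) * x"
  proof (rule ccontr)
    assume nt: "\<not> ?thesis"
    define \<epsilon> where "\<epsilon> = (a - (m + 1) * x) / 2"
    have e0: "\<epsilon> > 0" using nt unfolding \<epsilon>_def by simp
    have "cl ((A - (m * x - x + (x + \<epsilon>)) + f) / (n + 1)) = 0"
      using sp e0 n2 by (simp add: cl_zero_iff divide_le_0_iff add_pos_pos)
    then have "(a - (m * x + \<epsilon>)) * (x + \<epsilon>) \<le> (a - m * x) * x"
      using LDz[of "x + \<epsilon>"] x0 e0 by simp
    moreover have "(a - (m * x + \<epsilon>)) * (x + \<epsilon>) - (a - m * x) * x = \<epsilon> * (a - (m + 1) * x) - \<epsilon> * \<epsilon>"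
      by (simp add: algebra_simps)
    moreover have "\<epsilon> * (a - (m + 1) * x) = 2 * (\<epsilon> * \<epsilon>)" unfolding \<epsilon>_def by simp
    moreover have "\<epsilon> * \<epsilon> > 0" using e0 by simp
    ultimately show False by linarith
  qed
  have xpos: "x > 0"
  proof -
    have "(m + 1) * x > (m + 1) * D" using R big unfolding m_def by linarith
    then have "(m+1) * x > 0" using Dpos m1 by (smt (verit) mult_pos_pos)
    then show ?thesis using m1 by (simp add: zero_less_mult_iff)
  qed
  \<comment> \<open>Step 3: kink\<close>
  have K: "m * x = A + f"
  proof (rule ccontr)
    assume nt: "\<not> ?thesis"
    then have gt: "m * x > A + f" using sp by simp
    have eq: "(m + 1) * x = a"
    proof (rule ccontr)
      assume nt: "\<not> ?thesis"
      then have gt2: "(m + 1) * x > a" using R by simp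
      define \<epsilon> where "\<epsilon> = min (min x (m * x - A - f)) ((m + 1) * x - a) / 2"
      have e: "\<epsilon> > 0" "\<epsilon> \<le> x" "\<epsilon> \<le> (m * x - A - f)/2" "\<epsilon> \<le> ((m + 1) * x - a)/2"
        unfolding \<epsilon>_def using xpos gt gt2 by auto
      have "cl ((A - (m * x - x + (x - \<epsilon>)) + f) / (n + 1)) = 0"
        using e n2 by (simp add: cl_zero_iff divide_le_0_iff add_pos_pos)
      then have "(a - (m * x - \<epsilon>)) * (x - \<epsilon>) \<le> (a - m * x) * x"
        using LDz[of "x - \<epsilon>"] e by simp
      moreover have "(a - (m * x - \<epsilon>)) * (x - \<epsilon>) - (a - m * x) * x = \<epsilon> * ((m + 1) * x - a - \<epsilon>)"
        by (simp add: algebra_simps)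
      moreover have "\<epsilon> * ((m + 1) * x - a - \<epsilon>) \<ge> \<epsilon> * \<epsilon>"
        using e by (intro mult_left_mono) auto
      moreover have "\<epsilon> * \<epsilon> > 0" using e by simp
      ultimately show False by linarith
    qed
    have "a - D \<le> m * x" using AX unfolding A_eq .
    then have "a - D \<le> a - x" using eq by (simp add: algebra_simps)
    then have "x \<le> D" by simp
    then have "(m+1) * x \<le> (m+1) * D" using m1 by simp
    then show False using eq big unfolding m_def by simp
  qed
  have f0: "0 \<le> f" using AX K by simp
  define u where "u = D - f"
  have au: "a - m * x = u" unfolding u_def using K A_eq by simp
  have x_eq: "x = (A + f) / real M" using K m1 unfolding m_def by (simp add: field_simps)
  have c1: "x \<le> (n + 1) * u"
  proof (rule ccontr)
    assume nt: "\<not> ?thesis"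
    then have gt: "x > (n + 1) * u" by simp
    have nk: "(n + 1) * k > 0" using n2 kpos by simp
    define t where "t = min (min x ((n + 1) * k)) (x - (n + 1) * u) / 2"
    have t: "t > 0" "t \<le> x" "t \<le> (n + 1) * k" "t \<le> (x - (n + 1) * u)/2"
      unfolding t_def using xpos gt nk by auto
    have ct: "cl (t / (n + 1)) = t / (n + 1)"
      using t n2 by (intro cl_id) (auto simp: field_simps)
    have e1: "A - (m * x - x + (x - t)) + f = t" using K by simp
    have e2: "a - (m * x - x + (x - t)) = u + t" using au by simp
    have "(u + t - n * (t / (n + 1))) * (x - t) \<le> u * x"
      using LDz[of "x - t"] t unfolding e1 e2 ct au by simp
    moreover have "(u + t - n * (t / (n + 1))) * (x - t) - u * x = t / (n + 1) * (x - (n + 1) * u - t)"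
      using n2 by (simp add: field_simps)
    moreover have "t / (n + 1) * (x - (n + 1) * u - t) > 0"
      using t n2 by (intro mult_pos_pos) auto
    ultimately show False by simp
  qed
  have upos: "u > 0" using c1 xpos n2
    by (smt (verit) mult_nonneg_nonpos)
  have c2: "x \<le> u + n * k + 2 * sqrt (u * (n * k))"
  proof (rule ccontr)
    assume nt: "\<not> ?thesis"
    then have gt: "x > u + n * k + 2 * sqrt (u * (n * k))" by simp
    have sq0: "sqrt (u * (n * k)) \<ge> 0" using upos n2 kpos by simp
    have x1: "x > (n + 1) * k"
    proof (rule ccontr)
      assume nt: "\<not> ?thesis"
      then have "x \<le> (n+1) * k" by simp
      have "x \<le> u + n * k"
      proof (cases "u \<le> k")
        case True
        then have "n * u \<le> n * k" using n2 by (intro mult_left_mono) auto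
        then show ?thesis using c1 by (simp add: algebra_simps)
      next
        case False
        then show ?thesis using \<open>x \<le> (n+1) * k\<close> by (simp add: algebra_simps)
      qed
      then show False using gt sq0 by simp
    qed
    have nu: "n * u \<ge> k"
    proof (rule ccontr)
      assume nt: "\<not> ?thesis"
      then have "(n + 1) * u < (n + 1) * k"
      proof -
        have "u \<le> n * u" using upos n2 by simp
        then have "u < k" using nt by simp
        then show ?thesis using n2 by simp
      qed
      then show False using c1 x1 by simp
    qed
    have sqk: "sqrt (u * (n * k)) \<ge> k"
    proof -
      have "k * k \<le> (n * u) * k" using nu kpos by (intro mult_right_mono) auto
      then have "k^2 \<le> u * (n * k)" by (simp add: power2_eq_square algebra_simps)
      then show ?thesis using kpos by (metis real_sqrt_le_mono real_sqrt_abs abs_of_pos)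
    qed
    define t where "t = (x - u + n * k) / 2"
    have t1: "t > (n + 1) * k" unfolding t_def using gt sqk by (simp add: algebra_simps)
    have t2: "t \<le> x" unfolding t_def using x1 upos kpos by (simp add: algebra_simps)
    have ct: "cl (t / (n + 1)) = k" using t1 n2 by (intro cl_k) (simp add: field_simps)
    have e1: "A - (m * x - x + (x - t)) + f = t" using K by simp
    have e2: "a - (m * x - x + (x - t)) = u + t" using au by simp
    have "(u + t - n * k) * (x - t) \<le> u * x"
      using LDz[of "x - t"] t2 unfolding e1 e2 ct au by simp
    moreover have "(u + t - n * k) * (x - t) = (x + u - n * k)^2 / 4"
      unfolding t_def by (simp add: power2_eq_square field_simps)
    moreover have "(x + u - n * k)^2 > 4 * u * x"
      using sq_gt[of u "n * k" x] upos n2 kpos gt by simp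
    ultimately show False by simp
  qed
  show ?thesis
    unfolding FF_def using K f0 c1 c2 x_eq unfolding u_def m_def n_def by simp
qed

end


context mkt begin

lemma Apos: "a > (real M + 1) * D \<Longrightarrow> A > 0"
proof -
  assume big: "a > (real M + 1) * D"
  have "real M * D \<ge> 0" using Dpos by simp
  then show ?thesis unfolding A_eq using big by (simp add: algebra_simps)
qed

lemma F_bound: assumes big: "a > (real M + 1) * D" and f: "f \<in> FF" shows "f < D"
proof -
  have f0: "0 \<le> f" and c1: "(A+f)/real M \<le> (real N+1)*(D-f)" using f unfolding FF_def by auto
  have "(A+f)/real M > 0" using Apos[OF big] f0 M1 by simp
  then have "(real N+1)*(D-f) > 0" using c1 by linarith
  then show ?thesis by (simp add: zero_less_mult_iff)
qed

lemma F_down: assumes f2: "f2 \<in> FF" and "0 \<le> f1" "f1 \<le> f2" shows "f1 \<in> FF"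
proof -
  have c1: "(A+f2)/real M \<le> (real N+1)*(D-f2)"
    and c2: "(A+f2)/real M \<le> (D-f2) + real N*k + 2 * sqrt((D-f2)*(real N*k))"
    using f2 unfolding FF_def by auto
  have m: "(A+f1)/real M \<le> (A+f2)/real M" using assms(3) by (simp add: divide_right_mono)
  have r1: "(real N+1)*(D-f2) \<le> (real N+1)*(D-f1)" using assms(3) by (intro mult_left_mono) auto
  have "(D-f2)*(real N*k) \<le> (D-f1)*(real N*k)" using assms(3) kpos by (intro mult_right_mono) auto
  then have "sqrt((D-f2)*(real N*k)) \<le> sqrt((D-f1)*(real N*k))" by (rule real_sqrt_le_mono)
  then show ?thesis unfolding FF_def mem_Collect_eq using m r1 c1 c2 assms(2,3)
    by (intro conjI; linarith)
qed

lemma F_closed: "closed FF"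
  unfolding FF_def using M1
  by (intro closed_Collect_conj closed_Collect_le continuous_intros) auto

lemma F0_iff: "0 \<in> FF \<longleftrightarrow> a \<le> (real M + 1) * D + min (real M * real N * D)
                   (real M * real N * k + 2 * real M * sqrt (real N * k * D))"
proof -
  have m: "real M > 0" using M1 by simp
  define P where "P = real M * real N * D"
  define R where "R = real M * real N * k + 2 * real M * sqrt (real N * k * D)"
  have s: "sqrt (D * (real N * k)) = sqrt (real N * k * D)" by (simp add: mult_ac)
  have "0 \<in> FF \<longleftrightarrow> A / real M \<le> (real N + 1) * D \<and> A / real M \<le> D + real N * k + 2 * sqrt (real N * k * D)"
    unfolding FF_def by (simp add: s)
  also have "\<dots> \<longleftrightarrow> A \<le> real M * ((real N + 1) * D) \<and> A \<le> real M * (D + real N * k + 2 * sqrt (real N * k * D))"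
    using m by (simp add: pos_divide_le_eq mult.commute)
  also have "\<dots> \<longleftrightarrow> a - (real M + 1) * D \<le> P \<and> a - (real M + 1) * D \<le> R"
  proof -
    have e1: "real M * ((real N + 1) * D) = P + real M * D" unfolding P_def by (simp add: algebra_simps)
    have e2: "real M * (D + real N * k + 2 * sqrt (real N * k * D)) = R + real M * D"
      unfolding R_def by (simp add: algebra_simps)
    have e3: "(real M + 1) * D = real M * D + D" by (simp add: algebra_simps)
    show ?thesis unfolding e1 e2 e3 A_eq by linarith
  qed
  also have "\<dots> \<longleftrightarrow> a \<le> (real M + 1) * D + min P R" by (auto simp: min_def)
  finally show ?thesis unfolding P_def R_def .
qed

lemma F_pos:
  assumes lt: "a < (real M + 1) * D + min (real M * real N * D)
                   (real M * real N * k + 2 * real M * sqrt (real N * k * D))"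
  shows "\<exists>f>0. f \<in> FF"
proof -
  define g1 where "g1 = (\<lambda>f. (real N+1)*(D-f) - (A+f)/real M)"
  define g2 where "g2 = (\<lambda>f. (D-f) + real N*k + 2 * sqrt((D-f)*(real N*k)) - (A+f)/real M)"
  have m: "real M > 0" using M1 by simp
  have s: "sqrt ((D - 0) * (real N * k)) = sqrt (real N * k * D)" by (simp add: mult.commute)
  have h1: "g1 0 > 0" and h2: "g2 0 > 0"
  proof -
    define P where "P = real M * real N * D"
    define R where "R = real M * real N * k + 2 * real M * sqrt (real N * k * D)"
    have lt2: "a - (real M + 1) * D < P" "a - (real M + 1) * D < R" using lt unfolding P_def R_def by auto
    have e1: "real M * ((real N + 1) * D) = P + real M * D" unfolding P_def by (simp add: algebra_simps)
    have e2: "real M * (D + real N * k + 2 * sqrt (real N * k * D)) = R + real M * D"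
      unfolding R_def by (simp add: algebra_simps)
    have e3: "(real M + 1) * D = real M * D + D" by (simp add: algebra_simps)
    have "A < real M * ((real N + 1) * D)" "A < real M * (D + real N * k + 2 * sqrt (real N * k * D))"
      unfolding e1 e2 A_eq using lt2 e3 by linarith+
    moreover have s2: "sqrt ((D - 0) * (real N * k)) = sqrt (real N * k * D)" by (simp add: mult_ac)
    ultimately show "g1 0 > 0" "g2 0 > 0" unfolding g1_def g2_def s2 using m
      by (simp_all add: pos_divide_less_eq mult.commute)
  qed
  have t1: "(g1 \<longlongrightarrow> g1 0) (at_right 0)" unfolding g1_def by (intro tendsto_intros) (use M1 in auto)
  have t2: "(g2 \<longlongrightarrow> g2 0) (at_right 0)" unfolding g2_def by (intro tendsto_intros) (use M1 in auto)
  have "eventually (\<lambda>f. 0 < g1 f \<and> 0 < g2 f) (at_right (0::real))"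
    using order_tendstoD(1)[OF t1 h1] order_tendstoD(1)[OF t2 h2] by (rule eventually_conj)
  then obtain b where b: "b > 0" "\<And>y. y > 0 \<Longrightarrow> y < b \<Longrightarrow> 0 < g1 y \<and> 0 < g2 y"
    unfolding eventually_at_right_field by auto
  define f where "f = b/2"
  have "0 < g1 f \<and> 0 < g2 f" using b unfolding f_def by auto
  then have "f \<in> FF" unfolding FF_def g1_def g2_def f_def using b M1 by auto
  then show ?thesis using b unfolding f_def by (intro exI[of _ "b/2"]) auto
qed

end


theorem lemma5:
  fixes \<alpha> \<beta> C c k :: real and M N :: nat
  assumes "M \<ge> 1" and "N \<ge> 2" and "\<alpha> > 0" and "\<beta> > 0"
    and "C > 0" and "c \<ge> C" and "k > 0"
    and "(c - C) / \<beta> > 0"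
  defines "\<alpha>x \<equiv> (\<alpha> - C) / \<beta>" and "dC \<equiv> (c - C) / \<beta>"
  defines "Q \<equiv> symQ \<alpha> \<beta> C c k M N"
  defines "\<zeta>1 \<equiv> (real M + 1) * dC
             + min (real M * real N * dC)
                   (real M * real N * k + 2 * real M * sqrt (real N * k * dC))"
  shows "((\<exists>(f, x) \<in> Q. \<forall>j<N. spot_eq \<alpha> \<beta> c k M N (\<lambda>_. f) (\<lambda>_. x) j = 0)
            \<longleftrightarrow> \<alpha>x \<le> \<zeta>1)
       \<and> (\<alpha>x > (real M + 1) * dC \<longrightarrow>
           (\<exists>fbar::real.
              let S = {(f, x). 0 \<le> x \<and> x = (\<alpha>x - (dC - f)) / real M \<and> 0 \<le> f \<and> f \<le> fbar}
              in (\<forall>(f, x) \<in> Q.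
                    (\<forall>j<N. spot_eq \<alpha> \<beta> c k M N (\<lambda>_. f) (\<lambda>_. x) j = 0) \<longleftrightarrow> (f, x) \<in> S)
                 \<and> S \<subseteq> Q
                 \<and> (\<alpha>x < \<zeta>1 \<longrightarrow> fbar > 0)))"
proof -
  interpret mkt \<alpha> \<beta> C c k M N
    by unfold_locales (use assms in auto)
  have ax: "\<alpha>x = a" unfolding \<alpha>x_def a_def ..
  have dd: "dC = D" unfolding dC_def D_def ..
  have z1: "\<zeta>1 = (real M + 1) * D + min (real M * real N * D)
                   (real M * real N * k + 2 * real M * sqrt (real N * k * D))"
    unfolding \<zeta>1_def dd ..
  have exY: "(\<exists>(f, x) \<in> Q. \<forall>j<N. spot_eq \<alpha> \<beta> c k M N (\<lambda>_. f) (\<lambda>_. x) j = 0) \<longleftrightarrow> (\<exists>f x. Y0 f x)"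
    unfolding Q_def Y0_def by auto
  have z1ge: "\<zeta>1 \<ge> (real M + 1) * D"
  proof -
    have "0 \<le> real M * real N * D" using Dpos by simp
    moreover have "0 \<le> real M * real N * k + 2 * real M * sqrt (real N * k * D)"
      using Dpos kpos by simp
    ultimately show ?thesis unfolding z1 by simp
  qed
  have part1: "(\<exists>(f, x) \<in> Q. \<forall>j<N. spot_eq \<alpha> \<beta> c k M N (\<lambda>_. f) (\<lambda>_. x) j = 0) \<longleftrightarrow> \<alpha>x \<le> \<zeta>1"
    unfolding exY ax
  proof (cases "a \<le> (real M + 1) * D")
    case True
    then show "(\<exists>f x. Y0 f x) \<longleftrightarrow> a \<le> \<zeta>1" using construct[OF True] z1ge by auto
  next
    case False
    then have big: "a > (real M + 1) * D" by simp
    show "(\<exists>f x. Y0 f x) \<longleftrightarrow> a \<le> \<zeta>1"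
    proof
      assume "\<exists>f x. Y0 f x"
      then obtain f x where "Y0 f x" by blast
      then have "f \<in> FF" using char_fwd[OF big] by blast
      then have "0 \<in> FF" using F_down[of f 0] unfolding FF_def by auto
      then show "a \<le> \<zeta>1" unfolding z1 using F0_iff by simp
    next
      assume "a \<le> \<zeta>1"
      then have "0 \<in> FF" unfolding z1 using F0_iff by simp
      then show "\<exists>f x. Y0 f x" using char_bwd[OF big] by blast
    qed
  qed
  have part2: "\<exists>fbar::real.
              let S = {(f, x). 0 \<le> x \<and> x = (\<alpha>x - (dC - f)) / real M \<and> 0 \<le> f \<and> f \<le> fbar}
              in (\<forall>(f, x) \<in> Q.
                    (\<forall>j<N. spot_eq \<alpha> \<beta> c k M N (\<lambda>_. f) (\<lambda>_. x) j = 0) \<longleftrightarrow> (f, x) \<in> S)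
                 \<and> S \<subseteq> Q
                 \<and> (\<alpha>x < \<zeta>1 \<longrightarrow> fbar > 0)"
    if bigx: "\<alpha>x > (real M + 1) * dC"
  proof -
    have big: "a > (real M + 1) * D" using bigx unfolding ax dd .
    define fbar where "fbar = (if FF = {} then -1 else Sup FF)"
    have bdd: "bdd_above FF" using F_bound[OF big] by (intro bdd_aboveI[of _ D]) (auto intro: less_imp_le)
    have Fiff: "f \<in> FF \<longleftrightarrow> 0 \<le> f \<and> f \<le> fbar" for f
    proof (cases "FF = {}")
      case True then show ?thesis unfolding fbar_def by auto
    next
      case False
      then have sup: "Sup FF \<in> FF" using closed_contains_Sup[OF False bdd F_closed] by simp
      show ?thesis
      proof
        assume "f \<in> FF"
        then show "0 \<le> f \<and> f \<le> fbar" using False bdd unfolding fbar_def FF_def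
          by (auto intro: cSup_upper)
      next
        assume "0 \<le> f \<and> f \<le> fbar"
        then show "f \<in> FF" using F_down[OF sup] False unfolding fbar_def by auto
      qed
    qed
    have xe: "(\<alpha>x - (dC - f)) / real M = (A + f) / real M" for f
      unfolding ax dd A_eq by (simp add: algebra_simps)
    have Mpos: "real M > 0" using assms(1) by simp
    define S where "S = {(f, x). 0 \<le> x \<and> x = (\<alpha>x - (dC - f)) / real M \<and> 0 \<le> f \<and> f \<le> fbar}"
    have S_iff: "(f, x) \<in> S \<longleftrightarrow> x = (A + f) / real M \<and> f \<in> FF" for f x
    proof
      assume "(f, x) \<in> S"
      then show "x = (A + f) / real M \<and> f \<in> FF" unfolding S_def xe Fiff by auto
    next
      assume h: "x = (A + f) / real M \<and> f \<in> FF"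
      then have "0 \<le> x" using Apos[OF big] Fiff[of f] Mpos by auto
      then show "(f, x) \<in> S" using h unfolding S_def xe Fiff by auto
    qed
    have A1: "\<forall>(f, x) \<in> Q.
                    (\<forall>j<N. spot_eq \<alpha> \<beta> c k M N (\<lambda>_. f) (\<lambda>_. x) j = 0) \<longleftrightarrow> (f, x) \<in> S"
    proof (clarify)
      fix f x assume fxQ: "(f, x) \<in> Q"
      show "(\<forall>j<N. spot_eq \<alpha> \<beta> c k M N (\<lambda>_. f) (\<lambda>_. x) j = 0) \<longleftrightarrow> (f, x) \<in> S"
      proof
        assume "\<forall>j<N. spot_eq \<alpha> \<beta> c k M N (\<lambda>_. f) (\<lambda>_. x) j = 0"
        then have "Y0 f x" using fxQ unfolding Y0_def Q_def by simp
        then have "real M * x = A + f \<and> f \<in> FF" by (rule char_fwd[OF big])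
        then show "(f, x) \<in> S" unfolding S_iff using Mpos by (auto simp: field_simps)
      next
        assume "(f, x) \<in> S"
        then have "Y0 f x" unfolding S_iff using char_bwd[OF big] by auto
        then show "\<forall>j<N. spot_eq \<alpha> \<beta> c k M N (\<lambda>_. f) (\<lambda>_. x) j = 0" unfolding Y0_def by simp
      qed
    qed
    have A2: "S \<subseteq> Q"
    proof (clarify)
      fix f x assume "(f, x) \<in> S"
      then have "Y0 f x" unfolding S_iff using char_bwd[OF big] by auto
      then show "(f, x) \<in> Q" unfolding Y0_def Q_def by simp
    qed
    have A3: "\<alpha>x < \<zeta>1 \<longrightarrow> fbar > 0"
    proof
      assume "\<alpha>x < \<zeta>1"
      then obtain f where "f > 0" "f \<in> FF" using F_pos unfolding ax z1 by blast
      then show "fbar > 0" using Fiff[of f] by auto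
    qed
    show ?thesis
      apply (rule exI[of _ fbar])
      apply (unfold Let_def)
      apply (fold S_def)
      using A1 A2 A3 by (intro conjI)
  qed
  show ?thesis by (rule conjI[OF part1 impI[OF part2]])
qed


end
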